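(* Let $\mathcal{O}=(X_{\min},X_{\max})$ be bounded, $T>0$, and let $a=\tfrac12\sigma^2$, $b$, $r$ be bounded functions on $(0,T)\times\mathcal{O}$ such that $a(t,x)\ge\eta_0>0$ for all $(t,x)$ and $|a(t,x)-a(t,y)|\le L|x-y|$ for all $t\in(0,T)$, $x,y\in\mathcal{O}$ (for some $\eta_0>0$, $L\ge0$). For $J\ge1$ let $h=\frac{X_{\max}-X_{\min}}{J+1}$, $x_i=X_{\min}+ih$, and for a fixed time $t$ let $A$ be the tridiagonal $J\times J$ matrix with entries $A_{i,i-1}=-\frac{a(t,x_i)}{h^2}-\frac{b(t,x_i)}{2h}$, $A_{i,i}=\frac{2a(t,x_i)}{h^2}+r(t,x_i)$, $A_{i,i+1}=-\frac{a(t,x_i)}{h^2}+\frac{b(t,x_i)}{2h}$. Then there exist $\eta>0$ and $\gamma\ge0$, depending only on $\eta_0,L,\|b\|_\infty,\|r\|_\infty$ (in particular independent of $J$, $h$ and $t$), such that for all $e\in\mathbb{R}^J$, $$\langle e,Ae\rangle\ge\eta\,N(e/h)^2-\gamma\|e\|_2^2,$$ where $N(x):=\big(\sum_{j=1}^{J+1}|x_j-x_{j-1}|^2\big)^{1/2}$ with the convention $x_0=x_{J+1}=0$.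
   Context: $\langle\cdot,\cdot\rangle$ and $\|\cdot\|_2$ are the Euclidean inner product and norm on $\mathbb{R}^J$. *)

theory Defs
  imports "HOL-Analysis.Analysis"
begin

definition mesh :: "real \<Rightarrow> real \<Rightarrow> nat \<Rightarrow> real" where
  "mesh Xmin Xmax J = (Xmax - Xmin) / (real J + 1)"

definition node :: "real \<Rightarrow> real \<Rightarrow> nat \<Rightarrow> nat \<Rightarrow> real" where
  "node Xmin Xmax J i = Xmin + real i * mesh Xmin Xmax J"

text \<open>The tridiagonal J x J matrix A at time t, indexed by i, j in {1..J}
  (entries outside the tridiagonal band are 0).\<close>
definition FDmat ::
  "(real \<Rightarrow> real \<Rightarrow> real) \<Rightarrow> (real \<Rightarrow> real \<Rightarrow> real) \<Rightarrow> (real \<Rightarrow> real \<Rightarrow> real)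
   \<Rightarrow> real \<Rightarrow> real \<Rightarrow> nat \<Rightarrow> real \<Rightarrow> nat \<Rightarrow> nat \<Rightarrow> real" where
  "FDmat a b r Xmin Xmax J t i j =
     (let h = mesh Xmin Xmax J; xi = node Xmin Xmax J i in
      if j + 1 = i then - a t xi / h\<^sup>2 - b t xi / (2 * h)
      else if j = i then 2 * a t xi / h\<^sup>2 + r t xi
      else if j = i + 1 then - a t xi / h\<^sup>2 + b t xi / (2 * h)
      else 0)"

definition quad_form :: "(nat \<Rightarrow> nat \<Rightarrow> real) \<Rightarrow> nat \<Rightarrow> (nat \<Rightarrow> real) \<Rightarrow> real" where
  "quad_form A J e = (\<Sum>i=1..J. e i * (\<Sum>j=1..J. A i j * e j))"

definition sqnorm :: "nat \<Rightarrow> (nat \<Rightarrow> real) \<Rightarrow> real" where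
  "sqnorm J e = (\<Sum>i=1..J. (e i)\<^sup>2)"

definition ext0 :: "nat \<Rightarrow> (nat \<Rightarrow> real) \<Rightarrow> nat \<Rightarrow> real" where
  "ext0 J x j = (if 1 \<le> j \<and> j \<le> J then x j else 0)"

definition Nnorm :: "nat \<Rightarrow> (nat \<Rightarrow> real) \<Rightarrow> real" where
  "Nnorm J x = sqrt (\<Sum>j=1..J+1. \<bar>ext0 J x j - ext0 J x (j - 1)\<bar>\<^sup>2)"

end

theory Submission
  imports Defs
begin

lemma sum_shift1: "(\<Sum>j=1..J+1. f (j-1)) = f 0 + (\<Sum>i=1..J. f i)" for f :: "nat \<Rightarrow> real"
proof -
  have "(\<Sum>j=1..J+1. f (j-1)) = (\<Sum>i=0..J. f i)"
    using sum.shift_bounds_cl_Suc_ivl[of "\<lambda>j. f (j-1)" 0 J] by simp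
  also have "\<dots> = f 0 + (\<Sum>i=1..J. f i)" by (simp add: sum.atLeast_Suc_atMost)
  finally show ?thesis .
qed

lemma sum_top1: "(\<Sum>j=1..J+1. f j) = (\<Sum>j=1..J. f j) + f (J+1)" for f :: "nat \<Rightarrow> real"
  by (simp add: sum.cl_ivl_Suc)

lemma core:
  fixes a b r :: "real \<Rightarrow> real \<Rightarrow> real" and Xmin Xmax t eta0 L Bb Br :: real
    and J :: nat and e :: "nat \<Rightarrow> real"
  assumes hX: "Xmin < Xmax" and hJ: "J \<ge> 1" and he: "eta0 > 0" and hL: "L \<ge> 0"
    and apos: "\<forall>x\<in>{Xmin<..<Xmax}. a t x \<ge> eta0"
    and alip: "\<forall>x\<in>{Xmin<..<Xmax}. \<forall>y\<in>{Xmin<..<Xmax}. \<bar>a t x - a t y\<bar> \<le> L * \<bar>x - y\<bar>"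
    and bb: "\<forall>x\<in>{Xmin<..<Xmax}. \<bar>b t x\<bar> \<le> Bb"
    and rb: "\<forall>x\<in>{Xmin<..<Xmax}. \<bar>r t x\<bar> \<le> Br"
  shows "quad_form (FDmat a b r Xmin Xmax J t) J e
     \<ge> (eta0/2) * (Nnorm J (\<lambda>j. e j / mesh Xmin Xmax J))\<^sup>2 - ((L^2 + 2*Bb^2)/eta0 + Br) * sqnorm J e"
proof -
  define h where "h = mesh Xmin Xmax J"
  have hpos: "h > 0" using hX unfolding h_def mesh_def by simp
  define E where "E = ext0 J e"
  define D where "D j = (E j - E (j-1)) / h" for j
  define A where "A i = a t (node Xmin Xmax J i)" for i
  define B where "B i = b t (node Xmin Xmax J i)" for i
  define R where "R i = r t (node Xmin Xmax J i)" for i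
  have node_in: "node Xmin Xmax J i \<in> {Xmin<..<Xmax}" if "1 \<le> i" "i \<le> J" for i
  proof -
    have "real i * h > 0" using that hpos by simp
    moreover have "real i * h < Xmax - Xmin"
    proof -
      have "real i < real J + 1" using that by simp
      hence "real i * h < (real J + 1) * h" using hpos by (rule mult_strict_right_mono)
      also have "\<dots> = Xmax - Xmin" unfolding h_def mesh_def by simp
      finally show ?thesis .
    qed
    ultimately show ?thesis unfolding node_def h_def[symmetric] by simp
  qed
  have E0: "E 0 = 0" and EJ: "E (J+1) = 0" by (simp_all add: E_def ext0_def)
  have Ee: "E i = e i" if "1\<le>i" "i\<le>J" for i using that by (simp add: E_def ext0_def)
  have Apos: "A i \<ge> eta0" if "1\<le>i" "i\<le>J" for i using apos node_in[OF that] A_def by auto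
  have Bi: "\<bar>B i\<bar> \<le> Bb" if "1\<le>i" "i\<le>J" for i using bb node_in[OF that] B_def by auto
  have Ri: "\<bar>R i\<bar> \<le> Br" if "1\<le>i" "i\<le>J" for i using rb node_in[OF that] R_def by auto
  have Alip: "\<bar>A j - A (j-1)\<bar> \<le> L * h" if "2 \<le> j" "j \<le> J" for j
  proof -
    have "node Xmin Xmax J j - node Xmin Xmax J (j-1) = h"
      using that by (simp add: node_def h_def of_nat_diff algebra_simps)
    moreover have "node Xmin Xmax J j \<in> {Xmin<..<Xmax}" "node Xmin Xmax J (j-1) \<in> {Xmin<..<Xmax}"
      using node_in that by auto
    ultimately show ?thesis using alip hpos unfolding A_def by fastforce
  qed
  have inner: "(\<Sum>j=1..J. FDmat a b r Xmin Xmax J t i j * e j) =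
     (- A i / h^2 - B i / (2*h)) * E (i-1) + (2 * A i / h^2 + R i) * E i
     + (- A i / h^2 + B i / (2*h)) * E (i+1)" if "1 \<le> i" "i \<le> J" for i
  proof -
    define c1 where "c1 = - A i / h^2 - B i / (2*h)"
    define c2 where "c2 = 2 * A i / h^2 + R i"
    define c3 where "c3 = - A i / h^2 + B i / (2*h)"
    have pw: "FDmat a b r Xmin Xmax J t i j * e j = (if j = i-1 then c1 * E (i-1) else 0)
       + (if j = i then c2 * E i else 0) + (if j = i+1 then c3 * E (i+1) else 0)"
      if "j \<in> {1..J}" for j
      using that \<open>1\<le>i\<close> unfolding FDmat_def Let_def c1_def c2_def c3_def A_def B_def R_def h_def
        E_def ext0_def by auto
    have "(\<Sum>j=1..J. FDmat a b r Xmin Xmax J t i j * e j) = (\<Sum>j=1..J. (if j = i-1 then c1 * E (i-1) else 0)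
       + (if j = i then c2 * E i else 0) + (if j = i+1 then c3 * E (i+1) else 0))"
      using pw by (rule sum.cong[OF refl])
    also have "\<dots> = (if i-1 \<in> {1..J} then c1 * E (i-1) else 0) + (if i \<in> {1..J} then c2 * E i else 0)
        + (if i+1 \<in> {1..J} then c3 * E (i+1) else 0)"
      by (simp only: sum.distrib sum.delta finite_atLeastAtMost)
    also have "\<dots> = c1 * E (i-1) + c2 * E i + c3 * E (i+1)"
      using that by (auto simp: E_def ext0_def)
    finally show ?thesis unfolding c1_def c2_def c3_def .
  qed
  have Q: "quad_form (FDmat a b r Xmin Xmax J t) J e =
     (\<Sum>i=1..J. A i * (E i * (2*E i - E(i-1) - E(i+1)))) / h^2
     + (\<Sum>i=1..J. B i / (2*h) * E i * (E(i+1) - E(i-1)) + R i * (E i)^2)"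
  proof -
    have "quad_form (FDmat a b r Xmin Xmax J t) J e
       = (\<Sum>i=1..J. A i * (E i * (2*E i - E(i-1) - E(i+1))) / h^2
          + (B i / (2*h) * E i * (E(i+1) - E(i-1)) + R i * (E i)^2))"
      unfolding quad_form_def
    proof (rule sum.cong[OF refl])
      fix i assume "i \<in> {1..J}"
      hence i: "1 \<le> i" "i \<le> J" by auto
      show "e i * (\<Sum>j=1..J. FDmat a b r Xmin Xmax J t i j * e j) =
         A i * (E i * (2*E i - E(i-1) - E(i+1))) / h^2
          + (B i / (2*h) * E i * (E(i+1) - E(i-1)) + R i * (E i)^2)"
        unfolding inner[OF i] Ee[OF i, symmetric] using hpos
        by (simp add: field_simps power2_eq_square)
    qed
    also have "\<dots> = (\<Sum>i=1..J. A i * (E i * (2*E i - E(i-1) - E(i+1)))) / h^2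
     + (\<Sum>i=1..J. B i / (2*h) * E i * (E(i+1) - E(i-1)) + R i * (E i)^2)"
      by (simp add: sum.distrib sum_divide_distrib)
    finally show ?thesis .
  qed
  define f where "f k = (E (k+1) - E k) * A k * E k" for k
  have S1: "(\<Sum>i=1..J. A i * (E i * (2*E i - E(i-1) - E(i+1))))
     = (\<Sum>j=1..J+1. (E j - E(j-1)) * (A j * E j - A(j-1) * E(j-1)))"
  proof -
    have "(\<Sum>j=1..J+1. (E j - E(j-1)) * (A j * E j - A(j-1) * E(j-1)))
        = (\<Sum>j=1..J+1. (E j - E(j-1)) * A j * E j - f (j-1))"
      unfolding f_def by (rule sum.cong[OF refl]) (auto simp: algebra_simps)
    also have "\<dots> = (\<Sum>j=1..J+1. (E j - E(j-1)) * A j * E j) - (\<Sum>j=1..J+1. f (j-1))"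
      by (simp add: sum_subtractf)
    also have "(\<Sum>j=1..J+1. (E j - E(j-1)) * A j * E j) = (\<Sum>j=1..J. (E j - E(j-1)) * A j * E j)"
      using sum_top1[of "\<lambda>j. (E j - E(j-1)) * A j * E j" J] EJ by simp
    also have "(\<Sum>j=1..J+1. f (j-1)) = (\<Sum>i=1..J. f i)" using sum_shift1[of f J] E0 f_def by simp
    also have "(\<Sum>j=1..J. (E j - E(j-1)) * A j * E j) - (\<Sum>i=1..J. f i)
       = (\<Sum>i=1..J. A i * (E i * (2*E i - E(i-1) - E(i+1))))"
      unfolding sum_subtractf[symmetric] f_def by (rule sum.cong[OF refl]) (simp add: algebra_simps)
    finally show ?thesis by simp
  qed
  have P4: "(E j - E(j-1)) * (A j * E j - A(j-1) * E(j-1)) / h^2 \<ge> eta0 * (D j)^2 - L * \<bar>E(j-1)\<bar> * \<bar>D j\<bar>"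
    if j1: "1 \<le> j" and j2: "j \<le> J+1" for j
  proof -
    have Ej: "E j = E (j-1) + h * D j" using hpos by (simp add: D_def)
    have expand: "(E j - E(j-1)) * (A j * E j - A(j-1) * E(j-1)) / h^2
        = A j * (D j)^2 + (A j - A (j-1)) / h * E (j-1) * D j"
      unfolding Ej using hpos by (simp add: field_simps power2_eq_square)
    have sq: "(D j)^2 \<ge> 0" by simp
    consider "j = 1" | "j = J+1" | "2 \<le> j \<and> j \<le> J" using j1 j2 hJ by linarith
    then show ?thesis
    proof cases
      case 1
      have "A j * (D j)^2 \<ge> eta0 * (D j)^2" using Apos[of j] 1 hJ sq by (simp add: mult_right_mono)
      then show ?thesis using expand 1 E0 by simp
    next
      case 2
      have eq: "(E j - E(j-1)) * (A j * E j - A(j-1) * E(j-1)) / h^2 = A J * (D j)^2"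
        using 2 EJ hpos by (simp add: D_def field_simps power2_eq_square)
      have "A J * (D j)^2 \<ge> eta0 * (D j)^2" using Apos[of J] hJ sq by (simp add: mult_right_mono)
      moreover have "L * \<bar>E(j-1)\<bar> * \<bar>D j\<bar> \<ge> 0" using hL by simp
      ultimately show ?thesis using eq by linarith
    next
      case 3
      have a1: "A j * (D j)^2 \<ge> eta0 * (D j)^2" using Apos[of j] 3 sq by (simp add: mult_right_mono)
      have "\<bar>A j - A (j-1)\<bar> / h \<le> L" using Alip[of j] 3 hpos by (simp add: divide_le_eq abs_of_pos)
      hence "\<bar>(A j - A (j-1)) / h\<bar> * (\<bar>E (j-1)\<bar> * \<bar>D j\<bar>) \<le> L * (\<bar>E (j-1)\<bar> * \<bar>D j\<bar>)"
        using hpos by (intro mult_right_mono) (auto simp: abs_of_pos)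
      hence "\<bar>(A j - A (j-1)) / h * E (j-1) * D j\<bar> \<le> L * \<bar>E(j-1)\<bar> * \<bar>D j\<bar>"
        by (simp add: abs_mult mult.assoc)
      then show ?thesis using expand a1
        abs_ge_minus_self[of "(A j - A (j-1)) / h * E (j-1) * D j"] by linarith
    qed
  qed
  have young: "c * \<bar>x\<bar> * \<bar>y\<bar> \<le> (eta0/4) * y^2 + c^2/eta0 * x^2" for c x y :: real
  proof -
    have s: "(eta0 * \<bar>y\<bar> / 2 - c * \<bar>x\<bar>)^2 = eta0^2/4*y^2 - eta0 * (c * \<bar>x\<bar> * \<bar>y\<bar>) + c^2*x^2"
      by (simp add: power2_eq_square algebra_simps)
    have t: "eta0 * ((eta0/4) * y^2 + c^2/eta0 * x^2) = eta0^2/4*y^2 + c^2*x^2"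
      using he by (simp add: field_simps power2_eq_square)
    have "0 \<le> (eta0 * \<bar>y\<bar> / 2 - c * \<bar>x\<bar>)^2" by simp
    hence "eta0 * (c * \<bar>x\<bar> * \<bar>y\<bar>) \<le> eta0 * ((eta0/4) * y^2 + c^2/eta0 * x^2)"
      unfolding s t by linarith
    thus ?thesis using he by simp
  qed
  have P5: "B i / (2*h) * E i * (E(i+1) - E(i-1)) + R i * (E i)^2
      \<ge> -(eta0/16)*((D (i+1))^2 + (D i)^2) - (2*Bb^2/eta0 + Br) * (E i)^2" if "1\<le>i" "i\<le>J" for i
  proof -
    have "E(i+1) - E(i-1) = h * (D(i+1) + D i)" using hpos by (simp add: D_def field_simps)
    hence eq: "B i/(2*h) * E i * (E(i+1) - E(i-1)) = B i / 2 * E i * D(i+1) + B i/2 * E i * D i"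
      using hpos by (simp add: field_simps)
    have y: "B i / 2 * E i * X \<ge> -((eta0/16)*X^2 + Bb^2/eta0 * (E i)^2)" for X
    proof -
      have "\<bar>B i/2 * E i * X\<bar> = \<bar>B i\<bar>/2 * \<bar>E i\<bar> * \<bar>X\<bar>" by (simp add: abs_mult)
      also have "\<dots> \<le> Bb/2 * \<bar>E i\<bar> * \<bar>X\<bar>" using Bi[OF that]
        by (intro mult_right_mono) auto
      also have "\<dots> \<le> (eta0/16)*X^2 + Bb^2/eta0 * (E i)^2"
      proof -
        have s: "(eta0 * \<bar>X\<bar> / 4 - Bb * \<bar>E i\<bar>)^2 = eta0^2/16*X^2 - (eta0 * (Bb/2 * \<bar>E i\<bar> * \<bar>X\<bar>)) + Bb^2*(E i)^2"
          by (simp add: power2_eq_square algebra_simps)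
        have t: "eta0 * ((eta0/16)*X^2 + Bb^2/eta0 * (E i)^2) = eta0^2/16*X^2 + Bb^2*(E i)^2"
          using he by (simp add: field_simps power2_eq_square)
        have "0 \<le> (eta0 * \<bar>X\<bar> / 4 - Bb * \<bar>E i\<bar>)^2" by simp
        hence "eta0 * (Bb/2 * \<bar>E i\<bar> * \<bar>X\<bar>) \<le> eta0 * ((eta0/16)*X^2 + Bb^2/eta0 * (E i)^2)"
          unfolding s t by linarith
        thus ?thesis using he by simp
      qed
      finally show ?thesis using abs_ge_minus_self[of "B i / 2 * E i * X"] by linarith
    qed
    have "R i \<ge> -Br" using Ri[OF that] by linarith
    hence r: "R i * (E i)^2 \<ge> -Br * (E i)^2" by (intro mult_right_mono) auto
    have e1: "-(eta0/16)*((D (i+1))^2 + (D i)^2) - (2*Bb^2/eta0 + Br) * (E i)^2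
       = -((eta0/16)*(D (i+1))^2 + Bb^2/eta0 * (E i)^2) - ((eta0/16)*(D i)^2 + Bb^2/eta0 * (E i)^2)
         + (-Br * (E i)^2)"
      using he by (simp add: field_simps)
    show ?thesis unfolding eq e1 using y[of "D (i+1)"] y[of "D i"] r by linarith
  qed
  have SD: "(Nnorm J (\<lambda>j. e j / h))^2 = (\<Sum>j=1..J+1. (D j)^2)"
  proof -
    have "\<bar>ext0 J (\<lambda>j. e j / h) j - ext0 J (\<lambda>j. e j / h) (j-1)\<bar>^2 = (D j)^2" for j
      by (simp add: ext0_def E_def D_def diff_divide_distrib)
    hence "(\<Sum>j=1..J+1. \<bar>ext0 J (\<lambda>j. e j / h) j - ext0 J (\<lambda>j. e j / h) (j-1)\<bar>^2) = (\<Sum>j=1..J+1. (D j)^2)"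
      by simp
    moreover have "(\<Sum>j=1..J+1. (D j)^2) \<ge> 0" by (simp add: sum_nonneg)
    ultimately show ?thesis unfolding Nnorm_def by simp
  qed
  have SE: "sqnorm J e = (\<Sum>i=1..J. (E i)^2)" unfolding sqnorm_def
    by (rule sum.cong[OF refl]) (simp add: Ee)
  have SEshift: "(\<Sum>j=1..J+1. (E(j-1))^2) = (\<Sum>i=1..J. (E i)^2)"
    using sum_shift1[of "\<lambda>k. (E k)^2" J] E0 by simp
  have SD1: "(\<Sum>i=1..J. (D(i+1))^2) \<le> (\<Sum>j=1..J+1. (D j)^2)"
  proof -
    have "(\<Sum>j=1..J+1. (D j)^2) = (\<Sum>j=1..J+1. (D ((j-1)+1))^2)"
      by (rule sum.cong[OF refl]) auto
    also have "\<dots> = (D 1)^2 + (\<Sum>i=1..J. (D(i+1))^2)" using sum_shift1[of "\<lambda>k. (D(k+1))^2" J] by simp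
    finally show ?thesis by simp
  qed
  have SD2: "(\<Sum>i=1..J. (D i)^2) \<le> (\<Sum>j=1..J+1. (D j)^2)"
    using sum_top1[of "\<lambda>j. (D j)^2" J] by simp
  have L1: "(\<Sum>j=1..J+1. (E j - E(j-1)) * (A j * E j - A(j-1) * E(j-1))) / h^2
     \<ge> (\<Sum>j=1..J+1. (3*eta0/4)*(D j)^2 - L^2/eta0*(E(j-1))^2)"
    unfolding sum_divide_distrib
  proof (rule sum_mono)
    fix j assume "j \<in> {1..J+1}"
    then show "(3*eta0/4)*(D j)^2 - L^2/eta0*(E(j-1))^2
        \<le> (E j - E(j-1)) * (A j * E j - A(j-1) * E(j-1)) / h^2"
      using P4[of j] young[of L "E(j-1)" "D j"] by auto
  qed
  have L2: "(\<Sum>i=1..J. B i / (2*h) * E i * (E(i+1) - E(i-1)) + R i * (E i)^2)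
     \<ge> (\<Sum>i=1..J. -(eta0/16)*((D (i+1))^2 + (D i)^2) - (2*Bb^2/eta0 + Br) * (E i)^2)"
    by (rule sum_mono) (use P5 in auto)
  have e1: "(\<Sum>j=1..J+1. (3*eta0/4)*(D j)^2 - L^2/eta0*(E(j-1))^2)
     = (3*eta0/4) * (\<Sum>j=1..J+1. (D j)^2) - L^2/eta0 * (\<Sum>i=1..J. (E i)^2)"
  proof -
    have "(\<Sum>j=1..J+1. (3*eta0/4)*(D j)^2 - L^2/eta0*(E(j-1))^2)
      = (3*eta0/4) * (\<Sum>j=1..J+1. (D j)^2) - L^2/eta0 * (\<Sum>j=1..J+1. (E(j-1))^2)"
      by (simp only: sum_subtractf sum_distrib_left)
    then show ?thesis unfolding SEshift .
  qed
  have e2: "(\<Sum>i=1..J. -(eta0/16)*((D (i+1))^2 + (D i)^2) - (2*Bb^2/eta0 + Br) * (E i)^2)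
     = -(eta0/16) * (\<Sum>i=1..J. (D(i+1))^2) - (eta0/16) * (\<Sum>i=1..J. (D i)^2)
        - (2*Bb^2/eta0 + Br) * (\<Sum>i=1..J. (E i)^2)"
  proof -
    have "(\<Sum>i=1..J. -(eta0/16)*((D (i+1))^2 + (D i)^2) - (2*Bb^2/eta0 + Br) * (E i)^2)
      = (\<Sum>i=1..J. (-(eta0/16))*(D (i+1))^2 + (-(eta0/16))*(D i)^2 - (2*Bb^2/eta0 + Br) * (E i)^2)"
      by (rule sum.cong[OF refl]) (simp add: algebra_simps)
    also have "\<dots> = (-(eta0/16)) * (\<Sum>i=1..J. (D(i+1))^2) + (-(eta0/16)) * (\<Sum>i=1..J. (D i)^2)
        - (2*Bb^2/eta0 + Br) * (\<Sum>i=1..J. (E i)^2)"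
      by (simp only: sum_subtractf sum.distrib sum_distrib_left)
    finally show ?thesis by simp
  qed
  have m1: "(eta0/16) * (\<Sum>i=1..J. (D(i+1))^2) \<le> (eta0/16) * (\<Sum>j=1..J+1. (D j)^2)"
    using SD1 he by simp
  have m2: "(eta0/16) * (\<Sum>i=1..J. (D i)^2) \<le> (eta0/16) * (\<Sum>j=1..J+1. (D j)^2)"
    using SD2 he by simp
  have gam: "((L^2 + 2*Bb^2)/eta0 + Br) * (\<Sum>i=1..J. (E i)^2)
     = L^2/eta0 * (\<Sum>i=1..J. (E i)^2) + (2*Bb^2/eta0 + Br) * (\<Sum>i=1..J. (E i)^2)"
    by (simp add: algebra_simps add_divide_distrib)
  have fin: "(eta0/2) * (\<Sum>j=1..J+1. (D j)^2) = (3*eta0/4) * (\<Sum>j=1..J+1. (D j)^2)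
      - (eta0/16) * (\<Sum>j=1..J+1. (D j)^2) - (eta0/16) * (\<Sum>j=1..J+1. (D j)^2)
      - (eta0/8) * (\<Sum>j=1..J+1. (D j)^2)" by (simp add: field_simps)
  have "(\<Sum>j=1..J+1. (D j)^2) \<ge> 0" by (simp add: sum_nonneg)
  hence pos8: "(eta0/8) * (\<Sum>j=1..J+1. (D j)^2) \<ge> 0" using he by simp
  show ?thesis unfolding Q S1 SD[unfolded h_def] SE[unfolded h_def]
    using L1 L2 e1 e2 m1 m2 gam fin pos8 unfolding h_def by linarith
qed

theorem lemma4p6:
  fixes eta0 L Bb Br :: real
  assumes "eta0 > 0" and "L \<ge> 0" and "Bb \<ge> 0" and "Br \<ge> 0"
  shows "\<exists>eta > 0. \<exists>gamma \<ge> 0.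
    \<forall>(Xmin::real) (Xmax::real) (T::real) (a::real\<Rightarrow>real\<Rightarrow>real) (b::real\<Rightarrow>real\<Rightarrow>real)
      (r::real\<Rightarrow>real\<Rightarrow>real).
      Xmin < Xmax \<longrightarrow> T > 0 \<longrightarrow>
      (\<exists>M. \<forall>t\<in>{0<..<T}. \<forall>x\<in>{Xmin<..<Xmax}. \<bar>a t x\<bar> \<le> M) \<longrightarrow>
      (\<forall>t\<in>{0<..<T}. \<forall>x\<in>{Xmin<..<Xmax}. a t x \<ge> eta0) \<longrightarrow>
      (\<forall>t\<in>{0<..<T}. \<forall>x\<in>{Xmin<..<Xmax}. \<forall>y\<in>{Xmin<..<Xmax}.
          \<bar>a t x - a t y\<bar> \<le> L * \<bar>x - y\<bar>) \<longrightarrow>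
      (\<forall>t\<in>{0<..<T}. \<forall>x\<in>{Xmin<..<Xmax}. \<bar>b t x\<bar> \<le> Bb) \<longrightarrow>
      (\<forall>t\<in>{0<..<T}. \<forall>x\<in>{Xmin<..<Xmax}. \<bar>r t x\<bar> \<le> Br) \<longrightarrow>
      (\<forall>(J::nat) t (e::nat\<Rightarrow>real). J \<ge> 1 \<longrightarrow> t \<in> {0<..<T} \<longrightarrow>
         quad_form (FDmat a b r Xmin Xmax J t) J e
           \<ge> eta * (Nnorm J (\<lambda>j. e j / mesh Xmin Xmax J))\<^sup>2 - gamma * sqnorm J e)"
proof (rule exI[of _ "eta0/2"], intro conjI exI[of _ "(L^2 + 2*Bb^2)/eta0 + Br"] allI impI)
  show "eta0/2 > 0" using assms by simp
  show "(L^2 + 2*Bb^2)/eta0 + Br \<ge> 0" using assms by simp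
  fix Xmin Xmax T :: real and a b r :: "real\<Rightarrow>real\<Rightarrow>real" and J :: nat and t :: real and e :: "nat \<Rightarrow> real"
  assume h: "Xmin < Xmax" "T > 0" "\<exists>M. \<forall>t\<in>{0<..<T}. \<forall>x\<in>{Xmin<..<Xmax}. \<bar>a t x\<bar> \<le> M"
    "\<forall>t\<in>{0<..<T}. \<forall>x\<in>{Xmin<..<Xmax}. a t x \<ge> eta0"
    "\<forall>t\<in>{0<..<T}. \<forall>x\<in>{Xmin<..<Xmax}. \<forall>y\<in>{Xmin<..<Xmax}. \<bar>a t x - a t y\<bar> \<le> L * \<bar>x - y\<bar>"
    "\<forall>t\<in>{0<..<T}. \<forall>x\<in>{Xmin<..<Xmax}. \<bar>b t x\<bar> \<le> Bb"
    "\<forall>t\<in>{0<..<T}. \<forall>x\<in>{Xmin<..<Xmax}. \<bar>r t x\<bar> \<le> Br"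
    "J \<ge> 1" "t \<in> {0<..<T}"
  show "quad_form (FDmat a b r Xmin Xmax J t) J e
           \<ge> eta0/2 * (Nnorm J (\<lambda>j. e j / mesh Xmin Xmax J))\<^sup>2 - ((L^2 + 2*Bb^2)/eta0 + Br) * sqnorm J e"
    by (rule core) (use h assms in auto)
qed

end
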